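(* Let $M=p_i^{n_i}p_j^{n_j}p_k^{n_k}$ with distinct primes and $n_i,n_j,n_k\in\mathbb{N}$, let $A\oplus B=\mathbb{Z}_M$ with $\Phi_M(X)\mid A(X)$, assume $A$ is fibered on $D$-grids where $D=M/(p_ip_jp_k)$, and let $\Lambda=\Lambda(z_0,D)$ for some $z_0\in\mathbb{Z}_M$. (i) If there exists $a\in\Sigma_A(\Lambda)\cap\mathcal{I}\cap\mathcal{J}\cap\mathcal{K}$ with $\kappa(a)=i$, then $\kappa(a')=i$ for all $a'\in\Sigma_A(\Lambda)$; in particular $\Sigma_A(\Lambda)\subset\mathcal{I}$. (ii) If $\Sigma_A(\Lambda)\cap\mathcal{I}\cap\mathcal{J}\cap\mathcal{K}=\emptyset$, then there is $S\subset\{i,j,k\}$ with $|S|\le2$ such that $\kappa(a)\in S$ for all $a\in\Sigma_A(\Lambda)$; in particular $\Sigma_A(\Lambda)$ is contained in the union of two of the sets $\mathcal{I},\mathcal{J},\mathcal{K}$. (iii) Assume $\Sigma_A(\Lambda)\cap\mathcal{I}\cap\mathcal{J}\cap\mathcal{K}=\emptyset$ and that (after permuting the indices $i,j,k$ if necessary) $\kappa(a)\in\{i,j\}$ for all $a\in\Sigma_A(\Lambda)$. Let $z_\nu=z_0+\nu M/p_k$ for $\nu=0,1,\dots,p_k-1$. Then for each $\nu$ there is $\lambda(\nu)\in\{i,j\}$ such that $\kappa(a)=\lambda(\nu)$ for all $a\in\Sigma_A(z_\nu*F_i*F_j)$.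
   Context: $A\oplus B=\mathbb{Z}_M$ means every element of $\mathbb{Z}_M$ is uniquely $a+b$, $a\in A$, $b\in B$; $A(X)=\sum_{a\in A}X^a$ ($A$ in $\{0,\dots,M-1\}$), $\Phi_M$ the $M$-th cyclotomic polynomial. For $d\mid M$, $\Lambda(x,d)=\{x'\in\mathbb{Z}_M:d\mid x-x'\}$. For $\nu\in\{i,j,k\}$, $F_\nu=\{0,M/p_\nu,\dots,(p_\nu-1)M/p_\nu\}$; $x*Y=\{x+y:y\in Y\}$ and $X*Y=\{x+y:x\in X,y\in Y\}$. A set $Y$ is fibered in the $p_\nu$ direction if it is a union of sets $y*F_\nu$, $y\in Y$. "$A$ is fibered on $D$-grids" means for every $a\in A$, $A\cap\Lambda(a,D)$ is fibered in some direction $p_\nu$. The function $\kappa:A\to\{i,j,k\}$: for each $D$-grid $\Lambda(x,D)$ meeting $A$, fix one direction $\nu(x)$ in which $A\cap\Lambda(x,D)$ is fibered (chosen arbitrarily if several) and set $\kappa(a)=\nu(x)$ for $a\in A\cap\Lambda(x,D)$. $\mathcal{I}=\{a\in A:a*F_i\subset A\}$, $\mathcal{J},\mathcal{K}$ analogously with $F_j,F_k$. For $Z\subset\mathbb{Z}_M$, $\Sigma_A(Z)=\{a\in A:a+b\in Z\text{ for some }b\in B\}$. *)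

theory Defs
  imports Complex_Main "HOL-Computational_Algebra.Polynomial"
begin

datatype dir = Di | Dj | Dk

text \<open>Elements of Z_M are represented by naturals in {0..<M}; all sums are taken mod M.\<close>

definition direct_sum_Z :: "nat \<Rightarrow> nat set \<Rightarrow> nat set \<Rightarrow> bool" where
  "direct_sum_Z M A B \<longleftrightarrow> A \<subseteq> {..<M} \<and> B \<subseteq> {..<M} \<and>
     (\<forall>x<M. \<exists>!ab. fst ab \<in> A \<and> snd ab \<in> B \<and> (fst ab + snd ab) mod M = x)"

definition mask_poly :: "nat set \<Rightarrow> int poly" where
  "mask_poly A = (\<Sum>a\<in>A. monom 1 a)"

definition cyclotomic :: "nat \<Rightarrow> complex poly" where
  "cyclotomic M = (\<Prod>k\<in>{k. k < M \<and> coprime k M}. [:- cis (2 * pi * real k / real M), 1:])"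

definition Lambda :: "nat \<Rightarrow> nat \<Rightarrow> nat \<Rightarrow> nat set" where
  "Lambda M x d = {x'. x' < M \<and> int d dvd (int x - int x')}"

definition Fib :: "nat \<Rightarrow> (dir \<Rightarrow> nat) \<Rightarrow> dir \<Rightarrow> nat set" where
  "Fib M p v = {t * (M div p v) | t. t < p v}"

definition pt_plus :: "nat \<Rightarrow> nat \<Rightarrow> nat set \<Rightarrow> nat set" where
  "pt_plus M x Y = {(x + y) mod M | y. y \<in> Y}"

definition set_plus_mod :: "nat \<Rightarrow> nat set \<Rightarrow> nat set \<Rightarrow> nat set" where
  "set_plus_mod M X Y = {(x + y) mod M | x y. x \<in> X \<and> y \<in> Y}"

definition fibered :: "nat \<Rightarrow> (dir \<Rightarrow> nat) \<Rightarrow> nat set \<Rightarrow> dir \<Rightarrow> bool" where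
  "fibered M p Y v \<longleftrightarrow> Y = (\<Union>y\<in>Y. pt_plus M y (Fib M p v))"

definition fibered_on_grids :: "nat \<Rightarrow> (dir \<Rightarrow> nat) \<Rightarrow> nat \<Rightarrow> nat set \<Rightarrow> bool" where
  "fibered_on_grids M p D A \<longleftrightarrow> (\<forall>a\<in>A. \<exists>v. fibered M p (A \<inter> Lambda M a D) v)"

definition kappa_ok :: "nat \<Rightarrow> (dir \<Rightarrow> nat) \<Rightarrow> nat \<Rightarrow> nat set \<Rightarrow> (nat \<Rightarrow> dir) \<Rightarrow> bool" where
  "kappa_ok M p D A \<kappa> \<longleftrightarrow>
     (\<forall>a\<in>A. fibered M p (A \<inter> Lambda M a D) (\<kappa> a)) \<and>
     (\<forall>a\<in>A. \<forall>a'\<in>A. a' \<in> Lambda M a D \<longrightarrow> \<kappa> a' = \<kappa> a)"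

definition fullfib :: "nat \<Rightarrow> (dir \<Rightarrow> nat) \<Rightarrow> nat set \<Rightarrow> dir \<Rightarrow> nat set" where
  "fullfib M p A v = {a\<in>A. pt_plus M a (Fib M p v) \<subseteq> A}"

definition SigmaA :: "nat \<Rightarrow> nat set \<Rightarrow> nat set \<Rightarrow> nat set \<Rightarrow> nat set" where
  "SigmaA M A B Z = {a\<in>A. \<exists>b\<in>B. (a + b) mod M \<in> Z}"

end

theory Submission
  imports Defs
begin

lemma prod_perm:
  fixes p :: "dir \<Rightarrow> nat"
  shows "u \<noteq> v \<Longrightarrow> v \<noteq> w \<Longrightarrow> u \<noteq> w \<Longrightarrow> p Di * p Dj * p Dk = p u * p v * p w"
  by (cases u; cases v; cases w) (simp_all add: ac_simps)

lemma other_two: "\<exists>v w. (u::dir) \<noteq> v \<and> v \<noteq> w \<and> u \<noteq> w"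
proof (cases u)
  case Di then show ?thesis by (intro exI[of _ Dj] exI[of _ Dk]) simp
next
  case Dj then show ?thesis by (intro exI[of _ Di] exI[of _ Dk]) simp
next
  case Dk then show ?thesis by (intro exI[of _ Di] exI[of _ Dj]) simp
qed

lemma third: "(v::dir) \<noteq> w \<Longrightarrow> \<exists>u. u \<noteq> v \<and> u \<noteq> w"
  by (cases v; cases w) (auto intro: exI[of _ Di] exI[of _ Dj] exI[of _ Dk])

lemma dir_cases3: "x = Di \<or> x = Dj \<or> x = Dk" by (cases x) auto

locale L =
  fixes p :: "dir \<Rightarrow> nat" and M D :: nat and A B :: "nat set" and \<kappa> :: "nat \<Rightarrow> dir"
  assumes primes: "\<forall>v. prime (p v)" and injp: "inj p"
   and MD: "M = D * (p Di * p Dj * p Dk)" and Dpos: "D > 0"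
   and tiling: "direct_sum_Z M A B" and kap: "kappa_ok M p D A \<kappa>"
begin

lemma pgt1: "p v > 1" using primes prime_gt_1_nat by blast

lemma Mpos: "M > 0"
  using MD Dpos pgt1[of Di] pgt1[of Dj] pgt1[of Dk] by simp

lemma m_eq: assumes "u \<noteq> v" "v \<noteq> w" "u \<noteq> w"
  shows "M div p u = D * p v * p w"
proof -
  have "M = (D * p v * p w) * p u" using MD prod_perm[OF assms, of p] by (simp add: ac_simps)
  then show ?thesis using pgt1[of u] by simp
qed

lemma m_mult: "M div p u * p u = M"
proof -
  obtain v w where "u \<noteq> v \<and> v \<noteq> w \<and> u \<noteq> w" using other_two by blast
  then show ?thesis using m_eq[of u v w] MD prod_perm[of u v w p] by (simp add: ac_simps)
qed

lemma D_dvd_m: "int D dvd int (M div p u)"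
proof -
  obtain v w where "u \<noteq> v \<and> v \<noteq> w \<and> u \<noteq> w" using other_two by blast
  then show ?thesis using m_eq[of u v w] by simp
qed

lemma D_dvd_M: "int D dvd int M" using MD by simp

lemma m_dvd_M: "int (M div p u) dvd int M"
  by (metis dvd_triv_left m_mult of_nat_mult int_dvd_int_iff)

lemma coprime_p: "u \<noteq> v \<Longrightarrow> coprime (int (p u)) (int (p v))"
  using primes injp by (simp add: primes_coprime inj_eq)

lemma span:
  assumes "u \<noteq> v" "v \<noteq> w" "u \<noteq> w" "int D dvd x"
  shows "\<exists>e1 e2 e3. int (M div p u) dvd e1 \<and> int (M div p v) dvd e2 \<and> int (M div p w) dvd e3
          \<and> x = e1 + e2 + e3"
proof -
  obtain c where c: "x = int D * c" using assms(4) by blast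
  have cop1: "coprime (int (p v) * int (p w)) (int (p u))"
    using coprime_p assms by (simp add: coprime_commute)
  obtain \<alpha> \<beta> where ab: "\<alpha> * (int (p v) * int (p w)) + \<beta> * int (p u) = 1"
    using bezout_int[of "int (p v) * int (p w)" "int (p u)"] cop1 by (auto simp: coprime_iff_gcd_eq_1)
  have cop2: "coprime (int (p w)) (int (p v))"
    using coprime_p assms by simp
  obtain \<gamma> \<delta> where gd: "\<gamma> * int (p w) + \<delta> * int (p v) = 1"
    using bezout_int[of "int (p w)" "int (p v)"] cop2 by (auto simp: coprime_iff_gcd_eq_1)
  have one: "1 = \<alpha> * (int (p v) * int (p w)) + \<beta> * \<gamma> * (int (p u) * int (p w)) + \<beta> * \<delta> * (int (p u) * int (p v))"
  proof -
    have "1 = \<alpha> * (int (p v) * int (p w)) + \<beta> * int (p u) * (\<gamma> * int (p w) + \<delta> * int (p v))"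
      using ab gd by simp
    then show ?thesis by (simp add: algebra_simps)
  qed
  have mu: "int (M div p u) = int D * (int (p v) * int (p w))" using m_eq[OF assms(1-3)] by simp
  have mv: "int (M div p v) = int D * (int (p u) * int (p w))"
    using m_eq[of v u w] assms by simp
  have mw: "int (M div p w) = int D * (int (p u) * int (p v))"
    using m_eq[of w u v] assms by simp
  show ?thesis
  proof (intro exI conjI)
    show "int (M div p u) dvd c * \<alpha> * int (M div p u)" by simp
    show "int (M div p v) dvd c * \<beta> * \<gamma> * int (M div p v)" by simp
    show "int (M div p w) dvd c * \<beta> * \<delta> * int (M div p w)" by simp
    have "x = int D * c * 1" using c by simp
    also have "\<dots> = c * \<alpha> * int (M div p u) + c * \<beta> * \<gamma> * int (M div p v) + c * \<beta> * \<delta> * int (M div p w)"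
      by (subst one) (simp add: mu mv mw algebra_simps)
    finally show "x = c * \<alpha> * int (M div p u) + c * \<beta> * \<gamma> * int (M div p v) + c * \<beta> * \<delta> * int (M div p w)" .
  qed
qed

lemma modM: "x < M \<Longrightarrow> int M dvd int x - int z \<Longrightarrow> x = z mod M"
proof -
  assume "x < M" "int M dvd int x - int z"
  then have "int x mod int M = int z mod int M" using mod_eq_dvd_iff by blast
  moreover have "int x mod int M = int x" using \<open>x < M\<close> by simp
  ultimately have "int x = int (z mod M)" by (simp add: of_nat_mod)
  then show ?thesis by simp
qed

lemma Fib_mem:
  assumes "int (M div p v) dvd e"
  shows "\<exists>f\<in>Fib M p v. int M dvd int f - e"
proof -
  obtain c where c: "e = int (M div p v) * c" using assms by blast
  define t where "t = nat (c mod int (p v))"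
  have "0 \<le> c mod int (p v)" "c mod int (p v) < int (p v)" using pgt1[of v] by simp_all
  then have tl: "t < p v" by (simp add: t_def nat_less_iff)
  have "int (t * (M div p v)) = (c mod int (p v)) * int (M div p v)"
    using pgt1[of v] by (simp add: t_def)
  also have "\<dots> = (c * int (M div p v)) mod (int (p v) * int (M div p v))"
    by (rule mult_mod_left)
  also have "\<dots> = e mod int M" using m_mult[of v] c
    by (metis mult.commute of_nat_mult)
  finally have eq: "int (t * (M div p v)) = e mod int M" .
  have "int M dvd int (t * (M div p v)) - e" unfolding eq
    by (simp add: mod_eq_dvd_iff[symmetric])
  moreover have "t * (M div p v) \<in> Fib M p v" using tl by (auto simp: Fib_def)
  ultimately show ?thesis by blast
qed

lemma Fib_dvd: "f \<in> Fib M p v \<Longrightarrow> int (M div p v) dvd int f"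
  by (auto simp: Fib_def)

lemma A_lt: "a \<in> A \<Longrightarrow> a < M" using tiling by (auto simp: direct_sum_Z_def)
lemma B_lt: "b \<in> B \<Longrightarrow> b < M" using tiling by (auto simp: direct_sum_Z_def)

lemma fibA:
  assumes a: "a \<in> A" and g: "int (M div p (\<kappa> a)) dvd g" and x: "x < M"
    and d: "int M dvd int x - int a - g"
  shows "x \<in> A"
proof -
  let ?Y = "A \<inter> Lambda M a D"
  have aY: "a \<in> ?Y" using a A_lt[OF a] by (auto simp: Lambda_def)
  have fY: "?Y = (\<Union>y\<in>?Y. pt_plus M y (Fib M p (\<kappa> a)))"
    using kap a by (auto simp: kappa_ok_def fibered_def)
  obtain y where y: "y \<in> ?Y" and ay: "a \<in> pt_plus M y (Fib M p (\<kappa> a))"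
    using aY fY by blast
  then obtain f where f: "f \<in> Fib M p (\<kappa> a)" and af: "a = (y + f) mod M"
    unfolding pt_plus_def by blast
  have "int a mod int M = int (y + f) mod int M" using af by (simp add: of_nat_mod)
  then have h1: "int M dvd int a - int (y + f)" using mod_eq_dvd_iff by blast
  have "int x - int y - (int f + g) = (int x - int a - g) + (int a - int (y + f))" by simp
  then have h2: "int M dvd int x - int y - (int f + g)" using d h1 by (metis dvd_add)
  have "int (M div p (\<kappa> a)) dvd int f + g" using Fib_dvd[OF f] g by simp
  then obtain f' where f': "f' \<in> Fib M p (\<kappa> a)" "int M dvd int f' - (int f + g)"
    using Fib_mem by blast
  have "int x - int (y + f') = (int x - int y - (int f + g)) - (int f' - (int f + g))" by simp
  then have "int M dvd int x - int (y + f')" using h2 f'(2) by (metis dvd_diff)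
  then have "x = (y + f') mod M" using modM x by blast
  then have "x \<in> pt_plus M y (Fib M p (\<kappa> a))" using f' by (auto simp: pt_plus_def)
  then have "x \<in> ?Y" using fY y by blast
  then show ?thesis by blast
qed

lemma dvd_mod_self: "int M dvd int (z mod M) - int z"
proof -
  have "int (z mod M) mod int M = int z mod int M" by (simp add: of_nat_mod)
  then show ?thesis using mod_eq_dvd_iff by blast
qed

lemma uniq:
  assumes "x \<in> A" "x' \<in> A" "b \<in> B" "b' \<in> B" "int M dvd int x + int b - int x' - int b'"
  shows "x = x' \<and> b = b'"
proof -
  define t where "t = (x + b) mod M"
  have tM: "t < M" using Mpos by (simp add: t_def)
  have "int (x + b) mod int M = int (x' + b') mod int M"
    using assms(5) mod_eq_dvd_iff by (metis add_diff_eq diff_diff_eq of_nat_add)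
  then have "(x + b) mod M = (x' + b') mod M"
    by (metis of_nat_eq_iff of_nat_mod)
  then have t2: "(x' + b') mod M = t" by (simp add: t_def)
  have "\<exists>!ab. fst ab \<in> A \<and> snd ab \<in> B \<and> (fst ab + snd ab) mod M = t"
    using tiling tM by (auto simp: direct_sum_Z_def)
  then have "(x, b) = (x', b')" using assms(1-4) t2 unfolding t_def
    by (metis (mono_tags, lifting) fst_conv snd_conv)
  then show ?thesis by simp
qed

lemma grid:
  assumes "a \<in> A" "a' \<in> A" "int D dvd int a - int a'"
  shows "\<kappa> a' = \<kappa> a"
proof -
  have "a' \<in> Lambda M a D" using assms A_lt by (auto simp: Lambda_def)
  then show ?thesis using kap assms by (auto simp: kappa_ok_def)
qed

lemma shift:
  assumes a: "a \<in> A" and f: "int (M div p (\<kappa> a)) dvd f"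
  shows "\<exists>x\<in>A. int M dvd int x - int a - f"
proof -
  obtain fx where fx: "fx \<in> Fib M p (\<kappa> a)" "int M dvd int fx - f" using Fib_mem f by blast
  define x where "x = (a + fx) mod M"
  have xM: "x < M" using Mpos by (simp add: x_def)
  have h: "int M dvd int x - int (a + fx)" unfolding x_def by (rule dvd_mod_self)
  have "int x - int a - f = (int x - int (a + fx)) + (int fx - f)" by simp
  then have d: "int M dvd int x - int a - f" using h fx(2) by (metis dvd_add)
  then have "x \<in> A" using fibA[OF a f xM] by blast
  then show ?thesis using d by blast
qed

lemma core:
  assumes a: "a \<in> A" and a': "a' \<in> A" and b: "b \<in> B" and b': "b' \<in> B"
    and f: "int (M div p (\<kappa> a)) dvd f" and f': "int (M div p (\<kappa> a')) dvd f'"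
    and d: "int M dvd (int a + int b + f) - (int a' + int b' + f')"
  shows "\<kappa> a = \<kappa> a'"
proof -
  obtain x where x: "x \<in> A" "int M dvd int x - int a - f" using shift[OF a f] by blast
  obtain x' where x': "x' \<in> A" "int M dvd int x' - int a' - f'" using shift[OF a' f'] by blast
  have "int x + int b - int x' - int b' = (int x - int a - f) - (int x' - int a' - f') + ((int a + int b + f) - (int a' + int b' + f'))"
    by simp
  then have "int M dvd int x + int b - int x' - int b'" using x(2) x'(2) d
    by (metis dvd_add dvd_diff)
  then have xx: "x = x'" using uniq x(1) x'(1) b b' by blast
  have "int a - int a' = ((int x - int a - f) - (int x' - int a' - f')) * (-1) + (f' - f)"
    using xx by simp
  moreover have "int D dvd int M" by (rule D_dvd_M)
  then have "int D dvd ((int x - int a - f) - (int x' - int a' - f')) * (-1)"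
    using x(2) x'(2) by (metis dvd_diff dvd_mult2 dvd_trans)
  moreover have "int D dvd f' - f" using f f' D_dvd_m by (metis dvd_diff dvd_trans)
  ultimately have "int D dvd int a - int a'" by (metis dvd_add)
  then show ?thesis using grid[OF a a'] by simp
qed

lemma fullfib_kappa:
  assumes a: "a \<in> A" shows "a \<in> fullfib M p A (\<kappa> a)"
proof -
  have "pt_plus M a (Fib M p (\<kappa> a)) \<subseteq> A"
  proof
    fix x assume "x \<in> pt_plus M a (Fib M p (\<kappa> a))"
    then obtain f where f: "f \<in> Fib M p (\<kappa> a)" "x = (a + f) mod M" by (auto simp: pt_plus_def)
    have xM: "x < M" using f Mpos by simp
    have "int M dvd int x - int (a + f)" unfolding f(2) by (rule dvd_mod_self)
    then have "int M dvd int x - int a - int f" by (simp add: algebra_simps)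
    then show "x \<in> A" using fibA[OF a Fib_dvd[OF f(1)] xM] by blast
  qed
  then show ?thesis using a by (simp add: fullfib_def)
qed

lemma sigL:
  assumes "a \<in> SigmaA M A B (Lambda M z0 D)"
  shows "a \<in> A \<and> (\<exists>b\<in>B. int D dvd int a + int b - int z0)"
proof -
  obtain b where ab: "a \<in> A" "b \<in> B" "(a + b) mod M \<in> Lambda M z0 D"
    using assms by (auto simp: SigmaA_def)
  have h1: "int D dvd int z0 - int ((a + b) mod M)" using ab(3) by (simp add: Lambda_def)
  have h2: "int D dvd int ((a + b) mod M) - int (a + b)" using dvd_mod_self D_dvd_M dvd_trans by blast
  have "int a + int b - int z0 = - ((int z0 - int ((a + b) mod M)) + (int ((a + b) mod M) - int (a + b)))"
    by simp
  then have "int D dvd int a + int b - int z0" using h1 h2 by (metis dvd_add dvd_minus_iff)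
  then show ?thesis using ab by blast
qed

lemma part1:
  assumes a: "a \<in> SigmaA M A B (Lambda M z0 D)" and full: "\<forall>u. a \<in> fullfib M p A u"
    and a': "a' \<in> SigmaA M A B (Lambda M z0 D)"
  shows "\<kappa> a' = \<kappa> a"
proof (rule ccontr)
  assume ne: "\<kappa> a' \<noteq> \<kappa> a"
  define v where "v = \<kappa> a"
  define w where "w = \<kappa> a'"
  have vw: "v \<noteq> w" using ne by (simp add: v_def w_def)
  obtain u where u: "u \<noteq> v" "u \<noteq> w" using third[OF vw] by blast
  obtain b where b: "a \<in> A" "b \<in> B" "int D dvd int a + int b - int z0" using sigL[OF a] by blast
  obtain b' where b': "a' \<in> A" "b' \<in> B" "int D dvd int a' + int b' - int z0" using sigL[OF a'] by blast
  have "(int a' + int b') - (int a + int b) = (int a' + int b' - int z0) - (int a + int b - int z0)" by simp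
  then have "int D dvd (int a' + int b') - (int a + int b)" using b(3) b'(3) by (metis dvd_diff)
  then obtain ev eu ew where e: "int (M div p v) dvd ev" "int (M div p u) dvd eu" "int (M div p w) dvd ew"
    "(int a' + int b') - (int a + int b) = ev + eu + ew"
    using span[of v u w] u vw by metis
  obtain fu where fu: "fu \<in> Fib M p u" "int M dvd int fu - eu" using Fib_mem e(2) by blast
  define y where "y = (a + fu) mod M"
  have "y \<in> pt_plus M a (Fib M p u)" using fu by (auto simp: y_def pt_plus_def)
  then have yA: "y \<in> A" using full by (auto simp: fullfib_def)
  have hy: "int M dvd int y - int (a + fu)" unfolding y_def by (rule dvd_mod_self)
  have "int y - int a - eu = (int y - int (a + fu)) + (int fu - eu)" by simp
  then have hy2: "int M dvd int y - int a - eu" using hy fu(2) by (metis dvd_add)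
  have "int D dvd int y - int a - eu" using hy2 D_dvd_M dvd_trans by blast
  moreover have "int D dvd eu" using e(2) D_dvd_m dvd_trans by blast
  ultimately have "int D dvd int a - int y"
    by (metis (no_types, lifting) add_diff_cancel_left' diff_add_cancel diff_diff_eq2 dvd_add dvd_minus_iff minus_diff_eq)
  then have ky: "\<kappa> y = \<kappa> a" using grid[OF b(1) yA] by (simp add: dvd_diff_commute)
  have eqq: "(int y + int b + ev) - (int a' + int b' + (- ew)) = int y - int a - eu"
    using e(4) by simp
  have "int M dvd (int y + int b + ev) - (int a' + int b' + (- ew))" unfolding eqq by (rule hy2)
  moreover have "int (M div p (\<kappa> y)) dvd ev" using ky e(1) by (simp add: v_def)
  moreover have "int (M div p (\<kappa> a')) dvd - ew" using e(3) by (simp add: w_def)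
  ultimately have "\<kappa> y = \<kappa> a'" using core[OF yA b'(1) b(2) b'(2)] by blast
  then show False using ky ne by simp
qed

lemma part2: "\<exists>d. \<forall>a\<in>SigmaA M A B (Lambda M z0 D). \<kappa> a \<noteq> d"
proof (rule ccontr)
  assume "\<not> ?thesis"
  then have all: "\<forall>d. \<exists>a\<in>SigmaA M A B (Lambda M z0 D). \<kappa> a = d" by blast
  obtain ai where ai: "ai \<in> SigmaA M A B (Lambda M z0 D)" "\<kappa> ai = Di" using all by blast
  obtain aj where aj: "aj \<in> SigmaA M A B (Lambda M z0 D)" "\<kappa> aj = Dj" using all by blast
  obtain ak where ak: "ak \<in> SigmaA M A B (Lambda M z0 D)" "\<kappa> ak = Dk" using all by blast
  obtain bi where bi: "ai \<in> A" "bi \<in> B" "int D dvd int ai + int bi - int z0" using sigL[OF ai(1)] by blast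
  obtain bj where bj: "aj \<in> A" "bj \<in> B" "int D dvd int aj + int bj - int z0" using sigL[OF aj(1)] by blast
  obtain bk where bk: "ak \<in> A" "bk \<in> B" "int D dvd int ak + int bk - int z0" using sigL[OF ak(1)] by blast
  define Pi where "Pi = int ai + int bi"
  define Pj where "Pj = int aj + int bj"
  define Pk where "Pk = int ak + int bk"
  have "Pi - Pk = (int ai + int bi - int z0) - (int ak + int bk - int z0)" by (simp add: Pi_def Pk_def)
  then have "int D dvd Pi - Pk" using bi(3) bk(3) by (metis dvd_diff)
  then obtain \<alpha>i \<alpha>j \<alpha>k where al: "int (M div p Di) dvd \<alpha>i" "int (M div p Dj) dvd \<alpha>j" "int (M div p Dk) dvd \<alpha>k"
     "Pi - Pk = \<alpha>i + \<alpha>j + \<alpha>k" using span[of Di Dj Dk "Pi - Pk"] by blast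
  have "Pj - Pk = (int aj + int bj - int z0) - (int ak + int bk - int z0)" by (simp add: Pj_def Pk_def)
  then have "int D dvd Pj - Pk" using bj(3) bk(3) by (metis dvd_diff)
  then obtain \<beta>i \<beta>j \<beta>k where be: "int (M div p Di) dvd \<beta>i" "int (M div p Dj) dvd \<beta>j" "int (M div p Dk) dvd \<beta>k"
     "Pj - Pk = \<beta>i + \<beta>j + \<beta>k" using span[of Di Dj Dk "Pj - Pk"] by blast
  define Q where "Q = nat ((Pk + \<alpha>j + \<beta>k) mod int M)"
  have QM: "Q < M" using Mpos by (simp add: Q_def nat_less_iff)
  have "int Q = (Pk + \<alpha>j + \<beta>k) mod int M" using Mpos by (simp add: Q_def)
  then have "int Q mod int M = (Pk + \<alpha>j + \<beta>k) mod int M" by simp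
  then have hQ: "int M dvd int Q - (Pk + \<alpha>j + \<beta>k)" using mod_eq_dvd_iff by blast
  have "\<exists>!ab. fst ab \<in> A \<and> snd ab \<in> B \<and> (fst ab + snd ab) mod M = Q"
    using tiling QM by (auto simp: direct_sum_Z_def)
  then obtain a b where ab: "a \<in> A" "b \<in> B" "(a + b) mod M = Q" by auto
  have eqE: "int a + int b - (Pk + \<alpha>j + \<beta>k) = (int Q - (Pk + \<alpha>j + \<beta>k)) - (int ((a + b) mod M) - int (a + b))"
    using ab(3) by simp
  have E: "int M dvd int a + int b - (Pk + \<alpha>j + \<beta>k)" unfolding eqE
    using hQ dvd_mod_self[of "a + b"] by (rule dvd_diff)
  show False
  proof (cases "\<kappa> a")
    case Di
    have eq: "(int a + int b + \<beta>i) - (int aj + int bj + (\<alpha>j - \<beta>j)) = int a + int b - (Pk + \<alpha>j + \<beta>k)"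
      using be(4) by (simp add: Pj_def algebra_simps)
    have "\<kappa> a = \<kappa> aj"
      by (rule core[OF ab(1) bj(1) ab(2) bj(2) _ _ E[folded eq]]) (simp_all add: Di aj(2) be al dvd_diff)
    then show False using Di aj(2) by simp
  next
    case Dj
    have eq: "(int a + int b + (- \<alpha>j)) - (int ak + int bk + \<beta>k) = int a + int b - (Pk + \<alpha>j + \<beta>k)"
      by (simp add: Pk_def algebra_simps)
    have "\<kappa> a = \<kappa> ak"
      by (rule core[OF ab(1) bk(1) ab(2) bk(2) _ _ E[folded eq]]) (simp_all add: Dj ak(2) be al dvd_diff)
    then show False using Dj ak(2) by simp
  next
    case Dk
    have eq: "(int a + int b + (\<alpha>k - \<beta>k)) - (int ai + int bi + (- \<alpha>i)) = int a + int b - (Pk + \<alpha>j + \<beta>k)"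
      using al(4) by (simp add: Pi_def algebra_simps)
    have "\<kappa> a = \<kappa> ai"
      by (rule core[OF ab(1) bi(1) ab(2) bi(2) _ _ E[folded eq]]) (simp_all add: Dk ai(2) be al dvd_diff)
    then show False using Dk ai(2) by simp
  qed
qed

lemma planeL:
  assumes "a \<in> SigmaA M A B (set_plus_mod M (pt_plus M z (Fib M p v1)) (Fib M p v2))"
  shows "a \<in> A \<and> (\<exists>b\<in>B. \<exists>f1 f2. int (M div p v1) dvd f1 \<and> int (M div p v2) dvd f2 \<and>
           int M dvd int a + int b - int z - f1 - f2)"
proof -
  obtain b x f2 where ab: "a \<in> A" "b \<in> B" "(a + b) mod M = (x + f2) mod M"
     "x \<in> pt_plus M z (Fib M p v1)" "f2 \<in> Fib M p v2"
    using assms by (auto simp: SigmaA_def set_plus_mod_def)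
  obtain f1 where f1: "f1 \<in> Fib M p v1" "x = (z + f1) mod M" using ab(4) by (auto simp: pt_plus_def)
  have "(a + b) mod M = (z + f1 + f2) mod M" using ab(3) f1(2) by (simp add: mod_add_left_eq)
  then have "int (a + b) mod int M = int (z + f1 + f2) mod int M" by (metis of_nat_mod)
  then have "int M dvd int (a + b) - int (z + f1 + f2)" using mod_eq_dvd_iff by blast
  then have "int M dvd int a + int b - int z - int f1 - int f2" by (simp add: algebra_simps)
  then show ?thesis using ab f1 Fib_dvd by blast
qed

lemma part3:
  assumes v12: "v1 \<noteq> v2"
    and a: "a \<in> SigmaA M A B (set_plus_mod M (pt_plus M z (Fib M p v1)) (Fib M p v2))"
    and a': "a' \<in> SigmaA M A B (set_plus_mod M (pt_plus M z (Fib M p v1)) (Fib M p v2))"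
    and k: "\<kappa> a \<in> {v1, v2}" and k': "\<kappa> a' \<in> {v1, v2}"
  shows "\<kappa> a = \<kappa> a'"
proof (rule ccontr)
  assume ne: "\<kappa> a \<noteq> \<kappa> a'"
  obtain b f1 f2 where A1: "a \<in> A" "b \<in> B" "int (M div p v1) dvd f1" "int (M div p v2) dvd f2"
     "int M dvd int a + int b - int z - f1 - f2" using planeL[OF a] by blast
  obtain b' g1 g2 where A2: "a' \<in> A" "b' \<in> B" "int (M div p v1) dvd g1" "int (M div p v2) dvd g2"
     "int M dvd int a' + int b' - int z - g1 - g2" using planeL[OF a'] by blast
  have d: "int M dvd (int a + int b - int z - f1 - f2) - (int a' + int b' - int z - g1 - g2)"
    using A1(5) A2(5) by (rule dvd_diff)
  show False
  proof (cases "\<kappa> a = v1")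
    case True
    then have k2: "\<kappa> a' = v2" using ne k' by auto
    have eq: "(int a + int b + (g1 - f1)) - (int a' + int b' + (f2 - g2))
       = (int a + int b - int z - f1 - f2) - (int a' + int b' - int z - g1 - g2)" by simp
    have "\<kappa> a = \<kappa> a'"
      by (rule core[OF A1(1) A2(1) A1(2) A2(2) _ _ d[folded eq]]) (simp_all add: True k2 A1 A2 dvd_diff)
    then show False using ne by simp
  next
    case False
    then have k1: "\<kappa> a = v2" "\<kappa> a' = v1" using ne k k' by auto
    have eq: "(int a + int b + (g2 - f2)) - (int a' + int b' + (f1 - g1))
       = (int a + int b - int z - f1 - f2) - (int a' + int b' - int z - g1 - g2)" by simp
    have "\<kappa> a = \<kappa> a'"
      by (rule core[OF A1(1) A2(1) A1(2) A2(2) _ _ d[folded eq]]) (simp_all add: k1 A1 A2 dvd_diff)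
    then show False using ne by simp
  qed
qed

lemma plane_sub:
  assumes "a \<in> SigmaA M A B (set_plus_mod M (pt_plus M ((z0 + t * (M div p v3)) mod M) (Fib M p v1)) (Fib M p v2))"
    and "z0 < M"
  shows "a \<in> SigmaA M A B (Lambda M z0 D)"
proof -
  let ?z = "(z0 + t * (M div p v3)) mod M"
  obtain b f1 f2 where A1: "a \<in> A" "b \<in> B" "int (M div p v1) dvd f1" "int (M div p v2) dvd f2"
     "int M dvd int a + int b - int ?z - f1 - f2" using planeL[OF assms(1)] by blast
  have h1: "int D dvd int a + int b - int ?z - f1 - f2" using A1(5) D_dvd_M dvd_trans by blast
  have h2: "int D dvd int ?z - int (z0 + t * (M div p v3))"
    using dvd_mod_self D_dvd_M dvd_trans by blast
  have h3: "int D dvd int (t * (M div p v3))" using D_dvd_m[of v3] by simp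
  have h4: "int D dvd f1" "int D dvd f2" using A1(3,4) D_dvd_m dvd_trans by blast+
  have h5: "int D dvd int ((a + b) mod M) - int (a + b)"
    using dvd_mod_self D_dvd_M dvd_trans by blast
  have "int z0 - int ((a + b) mod M) = - ((int a + int b - int ?z - f1 - f2) + (int ?z - int (z0 + t * (M div p v3)))
      + int (t * (M div p v3)) + f1 + f2 + (int ((a + b) mod M) - int (a + b)))" by simp
  then have "int D dvd int z0 - int ((a + b) mod M)" using h1 h2 h3 h4 h5
    by (metis dvd_add dvd_minus_iff)
  then have "(a + b) mod M \<in> Lambda M z0 D" using Mpos by (simp add: Lambda_def)
  then show ?thesis using A1 by (auto simp: SigmaA_def)
qed

end

theorem lemma7p4:
  fixes p n :: "dir \<Rightarrow> nat" and M D z0 :: nat and A B :: "nat set" and \<kappa> :: "nat \<Rightarrow> dir"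
  assumes primes: "\<forall>v. prime (p v)" and distinct: "inj p"
    and expo: "\<forall>v. n v \<ge> 1"
    and M_def: "M = p Di ^ n Di * p Dj ^ n Dj * p Dk ^ n Dk"
    and tiling: "direct_sum_Z M A B"
    and cyc: "cyclotomic M dvd map_poly of_int (mask_poly A)"
    and D_def: "D = M div (p Di * p Dj * p Dk)"
    and fib: "fibered_on_grids M p D A"
    and kap: "kappa_ok M p D A \<kappa>"
    and z0: "z0 < M"
  shows
   "(\<forall>v. (\<exists>a\<in>SigmaA M A B (Lambda M z0 D) \<inter> fullfib M p A Di \<inter> fullfib M p A Dj \<inter> fullfib M p A Dk.
           \<kappa> a = v) \<longrightarrow>
         (\<forall>a'\<in>SigmaA M A B (Lambda M z0 D). \<kappa> a' = v) \<and>
         SigmaA M A B (Lambda M z0 D) \<subseteq> fullfib M p A v)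
    \<and>
    (SigmaA M A B (Lambda M z0 D) \<inter> fullfib M p A Di \<inter> fullfib M p A Dj \<inter> fullfib M p A Dk = {}
      \<longrightarrow> (\<exists>S. card S \<le> 2 \<and> (\<forall>a\<in>SigmaA M A B (Lambda M z0 D). \<kappa> a \<in> S)) \<and>
          (\<exists>v1 v2. SigmaA M A B (Lambda M z0 D) \<subseteq> fullfib M p A v1 \<union> fullfib M p A v2))
    \<and>
    (\<forall>v1 v2 v3. distinct [v1, v2, v3] \<longrightarrow>
       SigmaA M A B (Lambda M z0 D) \<inter> fullfib M p A Di \<inter> fullfib M p A Dj \<inter> fullfib M p A Dk = {}
       \<longrightarrow> (\<forall>a\<in>SigmaA M A B (Lambda M z0 D). \<kappa> a \<in> {v1, v2})
       \<longrightarrow> (\<forall>t < p v3. \<exists>l\<in>{v1, v2}.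
              \<forall>a\<in>SigmaA M A B (set_plus_mod M (pt_plus M ((z0 + t * (M div p v3)) mod M) (Fib M p v1))
                                               (Fib M p v2)).
                \<kappa> a = l))"
proof -
  have pv: "p v > 0" for v using primes prime_gt_0_nat by blast
  have "p Di dvd p Di ^ n Di" "p Dj dvd p Dj ^ n Dj" "p Dk dvd p Dk ^ n Dk"
    using expo by (simp_all add: Suc_le_eq)
  then have pp: "p Di * p Dj * p Dk dvd M" unfolding M_def by (intro mult_dvd_mono)
  have Mpos: "M > 0" unfolding M_def using pv by simp
  have MD: "M = D * (p Di * p Dj * p Dk)" using pp by (simp add: D_def)
  have Dpos: "D > 0" using MD Mpos by (metis gr0I mult_zero_left)
  interpret L p M D A B \<kappa>
    by unfold_locales (use primes distinct MD Dpos tiling kap in auto)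
  let ?S = "SigmaA M A B (Lambda M z0 D)"
  let ?F = "?S \<inter> fullfib M p A Di \<inter> fullfib M p A Dj \<inter> fullfib M p A Dk"
  have P1: "(\<forall>v. (\<exists>a\<in>?F. \<kappa> a = v) \<longrightarrow> (\<forall>a'\<in>?S. \<kappa> a' = v) \<and> ?S \<subseteq> fullfib M p A v)"
  proof (intro allI impI)
    fix v assume "\<exists>a\<in>?F. \<kappa> a = v"
    then obtain a where a: "a \<in> ?F" "\<kappa> a = v" by blast
    have full: "\<forall>u. a \<in> fullfib M p A u"
    proof
      fix u show "a \<in> fullfib M p A u" using a(1) by (cases u) auto
    qed
    have all: "\<forall>a'\<in>?S. \<kappa> a' = v" using part1[of a z0] a full by auto
    have "?S \<subseteq> fullfib M p A v"
    proof
      fix a' assume "a' \<in> ?S"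
      then have "a' \<in> A" "\<kappa> a' = v" using all sigL by blast+
      then show "a' \<in> fullfib M p A v" using fullfib_kappa by blast
    qed
    then show "(\<forall>a'\<in>?S. \<kappa> a' = v) \<and> ?S \<subseteq> fullfib M p A v" using all by blast
  qed
  have P2: "(?F = {} \<longrightarrow> (\<exists>S. card S \<le> 2 \<and> (\<forall>a\<in>?S. \<kappa> a \<in> S)) \<and>
          (\<exists>v1 v2. ?S \<subseteq> fullfib M p A v1 \<union> fullfib M p A v2))"
  proof
    obtain d where d: "\<forall>a\<in>?S. \<kappa> a \<noteq> d" using part2 by blast
    have ex: "\<exists>v1 v2. \<forall>x. x \<noteq> d \<longrightarrow> x \<in> {v1, v2}"
    proof (cases d)
      case Di show ?thesis by (rule exI[of _ Dj], rule exI[of _ Dk]) (use Di dir_cases3 in blast)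
    next
      case Dj show ?thesis by (rule exI[of _ Di], rule exI[of _ Dk]) (use Dj dir_cases3 in blast)
    next
      case Dk show ?thesis by (rule exI[of _ Di], rule exI[of _ Dj]) (use Dk dir_cases3 in blast)
    qed
    then obtain v1 v2 where vv: "\<forall>x. x \<noteq> d \<longrightarrow> x \<in> {v1, v2}" by blast
    have c: "card {v1, v2} \<le> 2" by (simp add: card_insert_if)
    have k: "\<forall>a\<in>?S. \<kappa> a \<in> {v1, v2}" using d vv by blast
    have "?S \<subseteq> fullfib M p A v1 \<union> fullfib M p A v2"
    proof
      fix a assume a: "a \<in> ?S"
      then have "a \<in> A" using sigL by blast
      then have "a \<in> fullfib M p A (\<kappa> a)" by (rule fullfib_kappa)
      then show "a \<in> fullfib M p A v1 \<union> fullfib M p A v2" using k a by auto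
    qed
    then show "(\<exists>S. card S \<le> 2 \<and> (\<forall>a\<in>?S. \<kappa> a \<in> S)) \<and>
          (\<exists>v1 v2. ?S \<subseteq> fullfib M p A v1 \<union> fullfib M p A v2)" using c k by blast
  qed
  have P3: "(\<forall>v1 v2 v3. distinct [v1, v2, v3] \<longrightarrow> ?F = {}
       \<longrightarrow> (\<forall>a\<in>?S. \<kappa> a \<in> {v1, v2})
       \<longrightarrow> (\<forall>t < p v3. \<exists>l\<in>{v1, v2}.
              \<forall>a\<in>SigmaA M A B (set_plus_mod M (pt_plus M ((z0 + t * (M div p v3)) mod M) (Fib M p v1))
                                               (Fib M p v2)).
                \<kappa> a = l))"
  proof (intro allI impI)
    fix v1 v2 v3 t
    assume dd: "distinct [v1, v2, v3]" and k: "\<forall>a\<in>?S. \<kappa> a \<in> {v1, v2}" and t: "t < p v3"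
    let ?P = "SigmaA M A B (set_plus_mod M (pt_plus M ((z0 + t * (M div p v3)) mod M) (Fib M p v1)) (Fib M p v2))"
    have kP: "\<forall>a\<in>?P. \<kappa> a \<in> {v1, v2}"
    proof
      fix a assume "a \<in> ?P"
      then have "a \<in> ?S" by (rule plane_sub[OF _ z0])
      then show "\<kappa> a \<in> {v1, v2}" using k by blast
    qed
    show "\<exists>l\<in>{v1, v2}. \<forall>a\<in>?P. \<kappa> a = l"
    proof (cases "?P = {}")
      case True then show ?thesis by blast
    next
      case False
      then obtain a0 where a0: "a0 \<in> ?P" by blast
      have "\<forall>a\<in>?P. \<kappa> a = \<kappa> a0"
      proof
        fix a assume aP: "a \<in> ?P"
        have v12: "v1 \<noteq> v2" using dd by simp
        show "\<kappa> a = \<kappa> a0" by (rule part3[OF v12 aP a0]) (use kP aP a0 in blast)+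
      qed
      then show ?thesis using kP a0 by blast
    qed
  qed
  show ?thesis using P1 P2 P3 by blast
qed

end
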